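(* Let $\Sigma=\{0,1\}$. For any $D,T\in\mathbb N_+$ there exists $\mathcal F\subseteq\Sigma^{\Sigma^*}$ such that $\mathrm{VCdim}(\mathcal F)=D$ but $\mathrm{VCdim}(\mathcal F^{\mathrm{e2e}(T)})=T\cdot D$ over the domain $\Sigma^n$ with $n=\lceil\log_2(DT)\rceil+1$.
   Context: For $f:\Sigma^*\to\Sigma$, $\bar f(\mathbf x)$ is $\mathbf x$ with $f(\mathbf x)$ appended; $f^{\mathrm{CoT}(T)}=\bar f^{\circ T}$; $f^{\mathrm{e2e}(T)}(\mathbf x)$ is the last token of $f^{\mathrm{CoT}(T)}(\mathbf x)$; $\mathcal F^{\mathrm{e2e}(T)}=\{f^{\mathrm{e2e}(T)}:f\in\mathcal F\}$. $\mathrm{VCdim}$ is the VC dimension ($\mathrm{VCdim}(\mathcal F)$ over the domain $\Sigma^*$; $\mathrm{VCdim}(\mathcal F^{\mathrm{e2e}(T)})$ of the restriction to $\Sigma^n$). *)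

theory Defs
  imports Complex_Main "HOL-Library.Extended_Nat"
begin

text \<open>Alphabet Sigma = {0,1} is modelled by bool; Sigma^* by bool list.
  A next-token predictor is f :: bool list \<Rightarrow> bool.\<close>

definition append_next :: "(bool list \<Rightarrow> bool) \<Rightarrow> bool list \<Rightarrow> bool list" where
  "append_next f x = x @ [f x]"

definition cot :: "nat \<Rightarrow> (bool list \<Rightarrow> bool) \<Rightarrow> bool list \<Rightarrow> bool list" where
  "cot T f = (append_next f ^^ T)"

definition e2e :: "nat \<Rightarrow> (bool list \<Rightarrow> bool) \<Rightarrow> bool list \<Rightarrow> bool" where
  "e2e T f x = last (cot T f x)"

definition e2e_class :: "nat \<Rightarrow> (bool list \<Rightarrow> bool) set \<Rightarrow> (bool list \<Rightarrow> bool) set" where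
  "e2e_class T F = e2e T ` F"

definition shatters :: "('a \<Rightarrow> bool) set \<Rightarrow> 'a set \<Rightarrow> bool" where
  "shatters H S \<longleftrightarrow> (\<forall>B\<subseteq>S. \<exists>h\<in>H. \<forall>x\<in>S. h x = (x \<in> B))"

definition VCdim_on :: "'a set \<Rightarrow> ('a \<Rightarrow> bool) set \<Rightarrow> enat" where
  "VCdim_on X H = Sup {enat (card S) | S. S \<subseteq> X \<and> finite S \<and> shatters H S}"

end

theory Submission
  imports Defs
begin

fun bval :: "bool list \<Rightarrow> nat" where
  "bval [] = 0"
| "bval (b # bs) = of_bool b * 2 ^ length bs + bval bs"

lemma bval_append: "bval (xs @ ys) = bval xs * 2 ^ length ys + bval ys"
  by (induction xs) (auto simp: algebra_simps power_add)

lemma bval_less: "bval bs < 2 ^ length bs"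
proof (induction bs)
  case Nil then show ?case by simp
next
  case (Cons b bs) then show ?case by (cases b) auto
qed

lemma bval_nth_pos:
  assumes "k < length bs" "bs ! k" shows "bval bs > 0"
proof -
  have "bs = take k bs @ (bs ! k) # drop (Suc k) bs"
    using assms(1) by (simp add: id_take_nth_drop)
  then have "bval bs = bval (take k bs) * 2 ^ length ((bs ! k) # drop (Suc k) bs)
       + bval ((bs ! k) # drop (Suc k) bs)"
    by (metis bval_append)
  then show ?thesis using assms(2) by simp
qed

lemma bval_step:
  assumes "length bs = K" "s < K" "\<theta> = 2 * bval bs + of_bool b0"
  shows "(bs ! s) = ((2 * bval (take s bs) + 1) * 2 ^ (K - s) - 1 < \<theta>)"
proof -
  define a :: nat where "a = 2 ^ (K - s - 1)"
  define q where "q = bval (take s bs)"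
  define r where "r = bval (drop (Suc s) bs)"
  define c where "c = bs ! s"
  have a2: "2 ^ (K - s) = 2 * a" unfolding a_def using assms(2)
    by (metis Suc_diff_Suc diff_Suc_1 power_Suc zero_less_diff)
  have ra: "r < a" unfolding r_def a_def using bval_less[of "drop (Suc s) bs"] assms(1) by simp
  have apos: "a > 0" unfolding a_def by simp
  have dec: "bs = take s bs @ c # drop (Suc s) bs"
    using assms by (simp add: id_take_nth_drop c_def)
  have "bval bs = q * 2 ^ length (c # drop (Suc s) bs) + bval (c # drop (Suc s) bs)"
    unfolding q_def by (subst dec) (rule bval_append)
  also have "length (c # drop (Suc s) bs) = K - s" using assms by simp
  also have "bval (c # drop (Suc s) bs) = of_bool c * a + r"
    using assms unfolding r_def a_def by simp
  finally have bv: "bval bs = q * (2 * a) + of_bool c * a + r" using a2 by simp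
  have th: "\<theta> = 4 * a * q + 2 * a * of_bool c + 2 * r + of_bool b0"
    using assms(3) bv by (simp add: algebra_simps)
  have v: "(2 * q + 1) * 2 ^ (K - s) - 1 = 4 * a * q + 2 * a - 1"
    using a2 by (simp add: algebra_simps)
  show ?thesis
    unfolding v th c_def[symmetric] q_def[symmetric]
    using ra apos by (cases c; cases b0) auto
qed

lemma cot_Suc: "cot (Suc s) f z = cot s f z @ [f (cot s f z)]"
  by (simp add: cot_def append_next_def)

lemma cot_0: "cot 0 f z = z"
  by (simp add: cot_def)

lemma cot_length: "length (cot s f z) = length z + s"
  by (induction s) (auto simp: cot_Suc cot_0)

lemma cot_take: "take (length z) (cot s f z) = z"
  by (induction s) (auto simp: cot_Suc cot_0 cot_length)

lemma e2e_last: "e2e (Suc K) f z = f (cot K f z)"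
  by (simp add: e2e_def cot_Suc)

lemma VC_eq:
  assumes "\<And>S. S \<subseteq> X \<Longrightarrow> finite S \<Longrightarrow> shatters H S \<Longrightarrow> card S \<le> m"
    and "S0 \<subseteq> X" "finite S0" "shatters H S0" "card S0 = m"
  shows "VCdim_on X H = enat m"
  unfolding VCdim_on_def
proof (rule antisym)
  show "Sup {enat (card S) |S. S \<subseteq> X \<and> finite S \<and> shatters H S} \<le> enat m"
    by (rule Sup_least) (use assms(1) in auto)
  show "enat m \<le> Sup {enat (card S) |S. S \<subseteq> X \<and> finite S \<and> shatters H S}"
    by (rule Sup_upper) (use assms(2-5) in auto)
qed

locale constr =
  fixes D T n :: nat and e :: "nat \<Rightarrow> bool list"
  assumes D1: "D \<ge> 1" and T1: "T \<ge> 1"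
    and einj: "inj_on e {..<D*T}"
    and elen: "\<And>k. k < D*T \<Longrightarrow> length (e k) = n"
begin

definition Z where "Z = e ` {..<D*T}"
definition idx where "idx x = inv_into {..<D*T} e (take n x)"
definition good where "good x \<longleftrightarrow> take n x \<in> Z"
definition part where "part x = (if good x then idx x div T else 0)"
definition val where "val x = (let j = idx x mod T; ys = drop n x; s = length ys in
   if s + 1 < T then (2 * bval ys + 1) * 2 ^ (T - s - 1) - 1
   else if j = 0 then 2 * bval ys else if ys ! (j - 1) then 0 else 2 ^ T)"
definition fth where "fth \<theta> x \<longleftrightarrow> good x \<and> val x < \<theta> (part x)"
definition FF where "FF = range fth"

lemma part_lt: "part x < D"
proof (cases "good x")
  case True
  then have "idx x < D * T" unfolding idx_def good_def Z_def
    by (metis inv_into_into lessThan_iff)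
  then show ?thesis using True T1 unfolding part_def
    by (simp add: less_mult_imp_div_less)
next
  case False then show ?thesis using D1 unfolding part_def by simp
qed

lemma idx_e: "k < D*T \<Longrightarrow> idx (e k @ ys) = k"
  unfolding idx_def using elen einj by (simp add: inv_into_f_f)

lemma good_e: "k < D*T \<Longrightarrow> good (e k @ ys)"
  unfolding good_def Z_def using elen by simp

lemma part_e: "k < D*T \<Longrightarrow> part (e k @ ys) = k div T"
  unfolding part_def using idx_e good_e by simp

lemma VC_F: "VCdim_on UNIV FF = enat D"
proof (rule VC_eq)
  fix S :: "bool list set" assume fin: "finite S" and sh: "shatters FF S"
  have allgood: "good x" if "x \<in> S" for x
  proof -
    obtain h where "h \<in> FF" "\<forall>x\<in>S. h x = (x \<in> S)" using sh unfolding shatters_def by blast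
    then show ?thesis using that unfolding FF_def fth_def by auto
  qed
  have "inj_on part S"
  proof (rule inj_onI, rule ccontr)
    fix p q assume pq: "p \<in> S" "q \<in> S" "part p = part q" "p \<noteq> q"
    have key: False if "a \<in> S" "b \<in> S" "part a = part b" "a \<noteq> b" "val a \<le> val b" for a b
    proof -
      have "{b} \<subseteq> S" using that by simp
      then obtain h where "h \<in> FF" "\<forall>x\<in>S. h x = (x \<in> {b})"
        using sh unfolding shatters_def by blast
      then obtain \<theta> where ht: "\<forall>x\<in>S. fth \<theta> x = (x \<in> {b})" unfolding FF_def by blast
      have "fth \<theta> b" "\<not> fth \<theta> a" using ht[rule_format, OF that(2)] ht[rule_format, OF that(1)] that(4) by auto
      then show False using that allgood[OF that(1)] unfolding fth_def by auto
    qed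
    show False
    proof (cases "val p \<le> val q")
      case True then show ?thesis using key[of p q] pq by auto
    next
      case False then show ?thesis using key[of q p] pq by auto
    qed
  qed
  then have "card S \<le> card {..<D}"
    by (rule card_inj_on_le) (auto simp: part_lt)
  then show "card S \<le> D" by simp
next
  define S0 where "S0 = (\<lambda>i. e (i * T)) ` {..<D}"
  have lt: "i * T < D * T" if "i < D" for i using that T1 by simp
  have inj: "inj_on (\<lambda>i. e (i * T)) {..<D}"
  proof (rule inj_onI)
    fix i j assume "i \<in> {..<D}" "j \<in> {..<D}" "e (i * T) = e (j * T)"
    then have "i * T = j * T" using einj lt by (auto dest: inj_onD)
    then show "i = j" using T1 by simp
  qed
  show "S0 \<subseteq> UNIV" by simp
  show "finite S0" unfolding S0_def by simp
  show "card S0 = D" unfolding S0_def using card_image[OF inj] by simp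
  show "shatters FF S0" unfolding shatters_def
  proof (intro allI impI)
    fix B assume "B \<subseteq> S0"
    define \<theta> where "\<theta> i = (if e (i * T) \<in> B then val (e (i * T)) + 1 else 0)" for i
    have "\<forall>x\<in>S0. fth \<theta> x = (x \<in> B)"
    proof
      fix x assume "x \<in> S0"
      then obtain i where i: "i < D" "x = e (i * T)" unfolding S0_def by auto
      have g: "good (e (i * T) @ [])" and p: "part (e (i * T) @ []) = i * T div T"
        using good_e part_e lt[OF i(1)] by blast+
      show "fth \<theta> x = (x \<in> B)" using g p T1 i unfolding fth_def \<theta>_def by auto
    qed
    then show "\<exists>h\<in>FF. \<forall>x\<in>S0. h x = (x \<in> B)" unfolding FF_def by blast
  qed
qed


definition bsL where "bsL B i = map (\<lambda>s. e (i * T + Suc s) \<in> B) [0..<T - 1]"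
definition thB where "thB B i = 2 * bval (bsL B i) + of_bool (e (i * T) \<in> B)"

lemma len_bsL: "length (bsL B i) = T - 1" unfolding bsL_def by simp

lemma cot_e:
  assumes k: "k < D * T" and s: "s \<le> T - 1"
  shows "cot s (fth (thB B)) (e k) = e k @ take s (bsL B (k div T))"
  using s
proof (induction s)
  case 0 then show ?case by (simp add: cot_0)
next
  case (Suc s)
  let ?bs = "bsL B (k div T)"
  have sK: "s < T - 1" using Suc.prems by simp
  have IH: "cot s (fth (thB B)) (e k) = e k @ take s ?bs" using Suc sK by simp
  have ln: "length (take s ?bs) = s" using sK len_bsL by simp
  have dr: "drop n (e k @ take s ?bs) = take s ?bs" using elen[OF k] by simp
  have v: "val (e k @ take s ?bs) = (2 * bval (take s ?bs) + 1) * 2 ^ (T - 1 - s) - 1"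
    unfolding val_def Let_def dr ln using sK by simp
  have st: "(?bs ! s) = ((2 * bval (take s ?bs) + 1) * 2 ^ (T - 1 - s) - 1 < thB B (k div T))"
    by (rule bval_step[OF len_bsL sK]) (simp add: thB_def)
  have "fth (thB B) (e k @ take s ?bs) = ?bs ! s"
    unfolding fth_def using good_e[OF k] part_e[OF k] v st by simp
  then show ?case using IH sK len_bsL
    by (simp add: cot_Suc take_Suc_conv_app_nth)
qed

lemma e2e_e:
  assumes k: "k < D * T"
  shows "e2e T (fth (thB B)) (e k) = (e k \<in> B)"
proof -
  define K where "K = T - 1"
  have TK: "T = Suc K" using T1 unfolding K_def by simp
  define i where "i = k div T"
  define j where "j = k mod T"
  have kij: "k = i * T + j" unfolding i_def j_def by simp
  have jT: "j < T" unfolding j_def using T1 by simp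
  let ?bs = "bsL B i"
  have lbs: "length ?bs = K" using len_bsL K_def by simp
  have c: "cot K (fth (thB B)) (e k) = e k @ ?bs"
    using cot_e[OF k, of K B] lbs unfolding K_def i_def by simp
  have dr: "drop n (e k @ ?bs) = ?bs" using elen[OF k] by simp
  have idx: "idx (e k @ ?bs) mod T = j" using idx_e[OF k] j_def by simp
  have fe: "e2e T (fth (thB B)) (e k) = (val (e k @ ?bs) < thB B i)"
  proof -
    have "e2e T (fth (thB B)) (e k) = fth (thB B) (cot K (fth (thB B)) (e k))"
      using e2e_last[of K] TK by simp
    then show ?thesis unfolding c fth_def using good_e[OF k] part_e[OF k] i_def by simp
  qed
  have th: "thB B i = 2 * bval ?bs + of_bool (e (i * T) \<in> B)" unfolding thB_def by simp
  show ?thesis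
  proof (cases "j = 0")
    case True
    have "val (e k @ ?bs) = 2 * bval ?bs"
      unfolding val_def Let_def dr idx lbs using True TK by simp
    then show ?thesis using fe th kij True by simp
  next
    case False
    have nth: "?bs ! (j - 1) = (e k \<in> B)"
    proof -
      have "[0..<T - 1] ! (j - 1) = j - 1" using False jT by simp
      then show ?thesis unfolding bsL_def using False jT kij by (simp add: K_def)
    qed
    have v: "val (e k @ ?bs) = (if ?bs ! (j - 1) then 0 else 2 ^ T)"
      unfolding val_def Let_def dr idx lbs using False TK by simp
    show ?thesis
    proof (cases "e k \<in> B")
      case True
      then have "bval ?bs > 0" using bval_nth_pos[of "j - 1" ?bs] nth lbs False jT TK by simp
      then show ?thesis using fe v nth True th by simp
    next
      case False
      have "bval ?bs < 2 ^ K" using bval_less[of ?bs] lbs by simp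
      then have "thB B i < 2 ^ T" using th TK by (cases "e (i * T) \<in> B") auto
      then show ?thesis using fe v nth False by simp
    qed
  qed
qed

lemma VC_e2e: "VCdim_on {x. length x = n} (e2e_class T FF) = enat (T * D)"
proof (rule VC_eq)
  fix S :: "bool list set" assume sub: "S \<subseteq> {x. length x = n}" and sh: "shatters (e2e_class T FF) S"
  have "S \<subseteq> Z"
  proof
    fix x assume xS: "x \<in> S"
    obtain h where "h \<in> e2e_class T FF" "\<forall>y\<in>S. h y = (y \<in> S)" using sh unfolding shatters_def by blast
    then obtain \<theta> where "e2e T (fth \<theta>) x" using xS unfolding e2e_class_def FF_def by auto
    moreover have "e2e T (fth \<theta>) x = fth \<theta> (cot (T - 1) (fth \<theta>) x)"
      using e2e_last[of "T - 1"] T1 by simp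
    ultimately have "good (cot (T - 1) (fth \<theta>) x)" unfolding fth_def by simp
    then show "x \<in> Z" unfolding good_def using cot_take[of x] sub xS by auto
  qed
  moreover have "card Z = D * T" unfolding Z_def using card_image[OF einj] by simp
  moreover have "finite Z" unfolding Z_def by simp
  ultimately show "card S \<le> T * D"
    using card_mono[of Z S] by (simp add: mult.commute)
next
  show "Z \<subseteq> {x. length x = n}" unfolding Z_def using elen by auto
  show "finite Z" unfolding Z_def by simp
  show "card Z = T * D" unfolding Z_def using card_image[OF einj] by simp
  show "shatters (e2e_class T FF) Z" unfolding shatters_def
  proof (intro allI impI)
    fix B assume "B \<subseteq> Z"
    have "\<forall>x\<in>Z. e2e T (fth (thB B)) x = (x \<in> B)" unfolding Z_def using e2e_e by auto
    then show "\<exists>h\<in>e2e_class T FF. \<forall>x\<in>Z. h x = (x \<in> B)"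
      unfolding e2e_class_def FF_def by blast
  qed
qed

end


lemma size_bound:
  fixes D T :: nat
  assumes "D \<ge> 1" "T \<ge> 1"
  shows "D * T \<le> 2 ^ (nat \<lceil>log 2 (real (D * T))\<rceil> + 1)"
proof -
  define c where "c = \<lceil>log 2 (real (D * T))\<rceil>"
  have pos: "real (D * T) > 0" using assms by simp
  have "real (D * T) \<ge> 1" using assms by (metis mult_le_mono nat_mult_1 of_nat_1 of_nat_le_iff)
  then have lg: "log 2 (real (D * T)) \<ge> 0" by simp
  have c0: "c \<ge> 0" unfolding c_def using lg by simp
  have "real (D * T) = 2 powr log 2 (real (D * T))" using pos by simp
  also have "\<dots> \<le> 2 powr real_of_int c" unfolding c_def
    by (rule powr_mono) auto
  also have "\<dots> = 2 powr real (nat c)" using c0 by simp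
  also have "\<dots> = 2 ^ nat c" by (simp add: powr_realpow)
  finally have "real (D * T) \<le> 2 ^ nat c" .
  then have "D * T \<le> 2 ^ nat c" by (metis of_nat_le_iff of_nat_numeral of_nat_power)
  also have "\<dots> \<le> 2 ^ (nat c + 1)" by simp
  finally show ?thesis unfolding c_def .
qed

theorem theoremE1:
  fixes D T :: nat
  assumes "D \<ge> 1" and "T \<ge> 1"
  shows "\<exists>F :: (bool list \<Rightarrow> bool) set.
           VCdim_on UNIV F = enat D \<and>
           VCdim_on {x. length x = nat \<lceil>log 2 (real (D * T))\<rceil> + 1} (e2e_class T F)
             = enat (T * D)"
proof -
  define n where "n = nat \<lceil>log 2 (real (D * T))\<rceil> + 1"
  have "card {..<D * T} \<le> card {xs :: bool list. set xs \<subseteq> UNIV \<and> length xs = n}"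
    using size_bound[OF assms] card_lists_length_eq[of "UNIV :: bool set" n] unfolding n_def[symmetric] by simp
  then obtain e where e: "e ` {..<D * T} \<subseteq> {xs :: bool list. set xs \<subseteq> UNIV \<and> length xs = n}"
    "inj_on e {..<D * T}"
    using card_le_inj[of "{..<D * T}" "{xs :: bool list. set xs \<subseteq> UNIV \<and> length xs = n}"]
      finite_lists_length_eq[of "UNIV :: bool set" n] by auto
  interpret constr D T n e
    using assms e by unfold_locales auto
  show ?thesis unfolding n_def[symmetric] using VC_F VC_e2e by blast
qed

end
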